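(* Let $\mathbf T$ be a countable homogeneous tournament and $\mathbf T^*$ an expansion of $\mathbf T$ as described in the context, and assume that $\mathrm{Age}(\mathbf T^* )$ has the Ramsey property. Then for every positive integer $n$, the class $\mathrm{Age}(\mathbf T[I_n]^* )$ has the Ramsey property.
   Context: For relational structures $\mathbf A,\mathbf B$ in the same language, $\binom{\mathbf B}{\mathbf A}$ denotes the set of substructures of $\mathbf B$ isomorphic to $\mathbf A$. For $k\ge 1$, $\mathbf C\to(\mathbf B)^{\mathbf A}_k$ means: for every map $c:\binom{\mathbf C}{\mathbf A}\to[k]=\{0,\dots,k-1\}$ there is $\mathbf B'\in\binom{\mathbf C}{\mathbf B}$ such that $c$ is constant on $\binom{\mathbf B'}{\mathbf A}$. A class $\mathcal K$ of finite structures has the Ramsey property if for all $k\ge1$ and all $\mathbf A,\mathbf B\in\mathcal K$ there is $\mathbf C\in\mathcal K$ with $\mathbf C\to(\mathbf B)^{\mathbf A}_k$. The age $\mathrm{Age}(\mathbf F)$ of a structure $\mathbf F$ is the class of finite structures embeddable in $\mathbf F$. A tournament is a directed graph in which every pair of distinct vertices carries exactly one directed edge; it is homogeneous if every isomorphism between finite substructures extends to an automorphism. $\mathbf T=(T,E^{\mathbf T})$ is a countable homogeneous tournament, and $\mathbf T^*$ is an expansion of $\mathbf T$ to a countable relational language $L_{\mathbf T^*}\supseteq\{E,<\}$ in which $<$ is interpreted as a linear order $<^*$ on $T$. For a positive integer $n$, $[n]=\{0,\dots,n-1\}$. The structure $\mathbf T[I_n]^*$ has universe $T\times[n]$ and language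 $L_{\mathbf T^*}\cup\{L_0,\dots,L_{n-1}\}$ ($L_i$ new unary symbols), interpreted as follows: $E((x,i),(y,j))$ iff $E^{\mathbf T}(x,y)$; for each $m$-ary $R\in L_{\mathbf T^*}\setminus\{E,<\}$, $R((x_1,i_1),\dots,(x_m,i_m))$ iff $R^{\mathbf T^*}(x_1,\dots,x_m)$; $(x,i)<(y,j)$ iff $x<^*y$, or $x=y$ and $i<j$; and $L_i(x,j)$ iff $j=i$. *)

theory Defs
  imports Main "HOL-Library.Countable_Set"
begin

type_synonym ('a, 's) struct = "'a set \<times> ('s \<Rightarrow> 'a list \<Rightarrow> bool)"

definition wf_struct :: "('s \<Rightarrow> nat) \<Rightarrow> ('a, 's) struct \<Rightarrow> bool" where
  "wf_struct ar A \<longleftrightarrow> (\<forall>s xs. snd A s xs \<longrightarrow> length xs = ar s \<and> set xs \<subseteq> fst A)"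

definition preserves :: "('s \<Rightarrow> nat) \<Rightarrow> ('a, 's) struct \<Rightarrow> ('b, 's) struct \<Rightarrow> ('a \<Rightarrow> 'b) \<Rightarrow> bool" where
  "preserves ar A B f \<longleftrightarrow>
     (\<forall>s xs. set xs \<subseteq> fst A \<and> length xs = ar s \<longrightarrow> (snd A s xs \<longleftrightarrow> snd B s (map f xs)))"

definition embedding :: "('s \<Rightarrow> nat) \<Rightarrow> ('a, 's) struct \<Rightarrow> ('b, 's) struct \<Rightarrow> ('a \<Rightarrow> 'b) \<Rightarrow> bool" where
  "embedding ar A B f \<longleftrightarrow> inj_on f (fst A) \<and> f ` fst A \<subseteq> fst B \<and> preserves ar A B f"

definition isomorphic :: "('s \<Rightarrow> nat) \<Rightarrow> ('a, 's) struct \<Rightarrow> ('b, 's) struct \<Rightarrow> bool" where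
  "isomorphic ar A B \<longleftrightarrow> (\<exists>f. bij_betw f (fst A) (fst B) \<and> preserves ar A B f)"

definition induced :: "('a, 's) struct \<Rightarrow> 'a set \<Rightarrow> ('a, 's) struct" where
  "induced C X = (X, \<lambda>s xs. snd C s xs \<and> set xs \<subseteq> X)"

text \<open>The set of substructures of C isomorphic to A (a substructure is identified with
  its universe, as substructures are induced).\<close>
definition copies :: "('s \<Rightarrow> nat) \<Rightarrow> ('a, 's) struct \<Rightarrow> ('b, 's) struct \<Rightarrow> 'a set set" where
  "copies ar C A = {X. X \<subseteq> fst C \<and> isomorphic ar (induced C X) A}"

definition arrows :: "('s \<Rightarrow> nat) \<Rightarrow> ('a, 's) struct \<Rightarrow> ('b, 's) struct \<Rightarrow> ('b, 's) struct \<Rightarrow> nat \<Rightarrow> bool" where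
  "arrows ar C B A k \<longleftrightarrow>
     (\<forall>c :: 'a set \<Rightarrow> nat. c ` copies ar C A \<subseteq> {..<k} \<longrightarrow>
        (\<exists>Y \<in> copies ar C B. \<exists>i. \<forall>X \<in> copies ar C A. X \<subseteq> Y \<longrightarrow> c X = i))"

definition ramsey_class :: "('s \<Rightarrow> nat) \<Rightarrow> ('a, 's) struct set \<Rightarrow> bool" where
  "ramsey_class ar K \<longleftrightarrow>
     (\<forall>k \<ge> 1. \<forall>A \<in> K. \<forall>B \<in> K. \<exists>C \<in> K. arrows ar C B A k)"

text \<open>The age of F: all finite structures embeddable in F; every finite structure is
  isomorphic to one whose universe is a finite set of naturals, so we represent the age by
  those.\<close>
definition age :: "('s \<Rightarrow> nat) \<Rightarrow> ('b, 's) struct \<Rightarrow> (nat, 's) struct set" where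
  "age ar F = {A. finite (fst A) \<and> wf_struct ar A \<and> (\<exists>f. embedding ar A F f)}"

definition tournament :: "'a set \<Rightarrow> ('a \<Rightarrow> 'a \<Rightarrow> bool) \<Rightarrow> bool" where
  "tournament T E \<longleftrightarrow> (\<forall>x\<in>T. \<not> E x x) \<and>
     (\<forall>x\<in>T. \<forall>y\<in>T. x \<noteq> y \<longrightarrow> (E x y \<longleftrightarrow> \<not> E y x))"

definition homogeneous_digraph :: "'a set \<Rightarrow> ('a \<Rightarrow> 'a \<Rightarrow> bool) \<Rightarrow> bool" where
  "homogeneous_digraph T E \<longleftrightarrow>
     (\<forall>X Y f. finite X \<and> X \<subseteq> T \<and> Y \<subseteq> T \<and> bij_betw f X Y \<and>
        (\<forall>x\<in>X. \<forall>y\<in>X. E x y \<longleftrightarrow> E (f x) (f y)) \<longrightarrow>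
        (\<exists>g. bij_betw g T T \<and> (\<forall>x\<in>T. \<forall>y\<in>T. E x y \<longleftrightarrow> E (g x) (g y)) \<and>
             (\<forall>x\<in>X. g x = f x)))"

definition countable_homogeneous_tournament :: "'a set \<Rightarrow> ('a \<Rightarrow> 'a \<Rightarrow> bool) \<Rightarrow> bool" where
  "countable_homogeneous_tournament T E \<longleftrightarrow>
     countable T \<and> tournament T E \<and> homogeneous_digraph T E"

definition is_expansion :: "('s \<Rightarrow> nat) \<Rightarrow> 's \<Rightarrow> 's \<Rightarrow> 'a set \<Rightarrow> ('a \<Rightarrow> 'a \<Rightarrow> bool)
    \<Rightarrow> ('a, 's) struct \<Rightarrow> bool" where
  "is_expansion ar E0 Lt T E Tstar \<longleftrightarrow>
     wf_struct ar Tstar \<and> fst Tstar = T \<and> E0 \<noteq> Lt \<and> ar E0 = 2 \<and> ar Lt = 2 \<and>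
     (\<forall>x\<in>T. \<forall>y\<in>T. snd Tstar E0 [x, y] \<longleftrightarrow> E x y) \<and>
     strict_linear_order_on T {(x, y). snd Tstar Lt [x, y]}"

text \<open>The language of T[I_n]^*: old symbols Inl s, new unary symbols L_i = Inr i.\<close>
fun blowup_ar :: "('s \<Rightarrow> nat) \<Rightarrow> 's + nat \<Rightarrow> nat" where
  "blowup_ar ar (Inl s) = ar s"
| "blowup_ar ar (Inr i) = 1"

definition blowup :: "('s \<Rightarrow> nat) \<Rightarrow> 's \<Rightarrow> 's \<Rightarrow> ('a, 's) struct \<Rightarrow> nat
    \<Rightarrow> ('a \<times> nat, 's + nat) struct" where
  "blowup ar E0 Lt Tstar n =
     (fst Tstar \<times> {..<n},
      \<lambda>s xs. set xs \<subseteq> fst Tstar \<times> {..<n} \<and>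
        (case s of
           Inl r \<Rightarrow> length xs = ar r \<and>
             (if r = Lt then
                (case xs of [(x, i), (y, j)] \<Rightarrow> snd Tstar Lt [x, y] \<or> (x = y \<and> i < j)
                          | _ \<Rightarrow> False)
              else snd Tstar r (map fst xs))
         | Inr i \<Rightarrow> (case xs of [(x, j)] \<Rightarrow> j = i | _ \<Rightarrow> False)))"

end

theory Submission
  imports Defs
begin

lemma iso_sym:
  assumes "isomorphic ar A B" shows "isomorphic ar B A"
proof -
  obtain f where f: "bij_betw f (fst A) (fst B)" "preserves ar A B f"
    using assms unfolding isomorphic_def by blast
  let ?g = "inv_into (fst A) f"
  have g: "bij_betw ?g (fst B) (fst A)" using f(1) by (rule bij_betw_inv_into)
  have "preserves ar B A ?g"
    unfolding preserves_def
  proof (intro allI impI)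
    fix s ys assume ys: "set ys \<subseteq> fst B \<and> length ys = ar s"
    have 1: "set (map ?g ys) \<subseteq> fst A" using ys g by (auto simp: bij_betw_def)
    have 2: "map f (map ?g ys) = ys"
      using ys f(1) by (auto simp: bij_betw_def f_inv_into_f intro!: map_idI)
    show "snd B s ys = snd A s (map ?g ys)"
      using f(2) 1 ys 2 unfolding preserves_def by (metis length_map)
  qed
  with g show ?thesis unfolding isomorphic_def by blast
qed

lemma iso_trans:
  assumes "isomorphic ar A B" "isomorphic ar B C" shows "isomorphic ar A C"
proof -
  obtain f where f: "bij_betw f (fst A) (fst B)" "preserves ar A B f"
    using assms unfolding isomorphic_def by blast
  obtain g where g: "bij_betw g (fst B) (fst C)" "preserves ar B C g"
    using assms unfolding isomorphic_def by blast
  have "bij_betw (g \<circ> f) (fst A) (fst C)" using f(1) g(1) by (rule bij_betw_trans)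
  moreover have "preserves ar A C (g \<circ> f)"
    unfolding preserves_def
  proof (intro allI impI)
    fix s xs assume xs: "set xs \<subseteq> fst A \<and> length xs = ar s"
    have 1: "set (map f xs) \<subseteq> fst B" using xs f(1) by (auto simp: bij_betw_def)
    show "snd A s xs = snd C s (map (g \<circ> f) xs)"
      using f(2) g(2) xs 1 unfolding preserves_def by (metis length_map map_map)
  qed
  ultimately show ?thesis unfolding isomorphic_def by blast
qed

lemma induced_induced: "X \<subseteq> D \<Longrightarrow> induced (induced C D) X = induced C X"
  unfolding induced_def by (simp add: fun_eq_iff) blast

lemma copies_induced:
  "copies ar (induced C D) A = {X. X \<subseteq> D \<and> isomorphic ar (induced C X) A}"
proof -
  have f: "fst (induced C D) = D" by (simp add: induced_def)
  show ?thesis unfolding copies_def f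
  proof (intro Collect_cong iffI conjI)
    fix X assume "X \<subseteq> D \<and> isomorphic ar (induced (induced C D) X) A"
    thus "X \<subseteq> D" "isomorphic ar (induced C X) A" using induced_induced[of X D C] by auto
  next
    fix X assume "X \<subseteq> D \<and> isomorphic ar (induced C X) A"
    thus "X \<subseteq> D" "isomorphic ar (induced (induced C D) X) A" using induced_induced[of X D C] by auto
  qed
qed

lemma embedding_iso:
  assumes "embedding ar A C f" shows "isomorphic ar A (induced C (f ` fst A))"
  using assms unfolding embedding_def isomorphic_def preserves_def induced_def
  by (auto simp: bij_betw_def)

lemma natcopy:
  assumes "finite Z" "Z \<subseteq> fst F"
  shows "\<exists>N \<in> age ar F. isomorphic ar N (induced F Z)"
proof -
  obtain h where h: "bij_betw h {0..<card Z} Z" using ex_bij_betw_nat_finite[OF assms(1)] by blast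
  define N :: "(nat, _) struct" where
    "N = ({0..<card Z}, \<lambda>s xs. set xs \<subseteq> {0..<card Z} \<and> length xs = ar s \<and> snd F s (map h xs))"
  have "wf_struct ar N" unfolding N_def wf_struct_def by auto
  moreover have "embedding ar N F h"
    using h assms(2) unfolding embedding_def N_def preserves_def bij_betw_def by auto
  moreover have "isomorphic ar N (induced F Z)"
    unfolding isomorphic_def
    apply (rule exI[of _ h])
    using h unfolding N_def preserves_def induced_def bij_betw_def by auto
  ultimately show ?thesis unfolding age_def N_def by auto
qed

lemma restrict_iso:
  assumes "bij_betw g (fst C1) (fst C2)" "preserves ar C1 C2 g" "X \<subseteq> fst C1"
  shows "isomorphic ar (induced C1 X) (induced C2 (g ` X))"
  unfolding isomorphic_def
proof (intro exI conjI)
  show "bij_betw g (fst (induced C1 X)) (fst (induced C2 (g ` X)))"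
    using assms by (auto simp: induced_def bij_betw_def intro: inj_on_subset)
  show "preserves ar (induced C1 X) (induced C2 (g ` X)) g"
    unfolding preserves_def induced_def
  proof (intro allI impI)
    fix s xs assume "set xs \<subseteq> fst (X, \<lambda>s xs. snd C1 s xs \<and> set xs \<subseteq> X) \<and> length xs = ar s"
    hence xs: "set xs \<subseteq> X" "length xs = ar s" by auto
    have "snd C1 s xs = snd C2 s (map g xs)"
      using assms(2) xs assms(3) unfolding preserves_def by auto
    thus "snd (X, \<lambda>s xs. snd C1 s xs \<and> set xs \<subseteq> X) s xs =
          snd (g ` X, \<lambda>s xs. snd C2 s xs \<and> set xs \<subseteq> g ` X) s (map g xs)"
      using xs by auto
  qed
qed

lemma arrows_transport:
  assumes iso: "isomorphic ar C1 C2" and ar2: "arrows ar C2 B A k"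
  shows "arrows ar C1 B A k"
proof -
  obtain g where g: "bij_betw g (fst C1) (fst C2)" "preserves ar C1 C2 g"
    using iso unfolding isomorphic_def by blast
  let ?gi = "inv_into (fst C1) g"
  have cop: "X \<in> copies ar C1 A' \<longleftrightarrow> g ` X \<in> copies ar C2 A'" if "X \<subseteq> fst C1" for X A'
  proof -
    have i: "isomorphic ar (induced C1 X) (induced C2 (g ` X))" by (rule restrict_iso[OF g that])
    have "g ` X \<subseteq> fst C2" using g(1) that by (auto simp: bij_betw_def)
    have "isomorphic ar (induced C1 X) A' \<longleftrightarrow> isomorphic ar (induced C2 (g ` X)) A'"
      using iso_trans[OF i] iso_trans[OF iso_sym[OF i]] by blast
    thus ?thesis unfolding copies_def using that \<open>g ` X \<subseteq> fst C2\<close> by simp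
  qed
  have gim: "g ` fst C1 = fst C2" and ginj: "inj_on g (fst C1)" using g(1) by (auto simp: bij_betw_def)
  have bk: "?gi ` (g ` X) = X" if "X \<subseteq> fst C1" for X
    using inv_into_image_cancel[OF ginj that] .
  have fwd: "g ` (?gi ` Z) = Z" if "Z \<subseteq> fst C2" for Z
    using image_inv_into_cancel[OF gim that] .
  have into: "?gi ` Z \<subseteq> fst C1" if "Z \<subseteq> fst C2" for Z
  proof
    fix z assume "z \<in> ?gi ` Z"
    then obtain y where y: "y \<in> Z" "z = ?gi y" by blast
    have "y \<in> g ` fst C1" using y(1) that gim by blast
    thus "z \<in> fst C1" using y(2) by (simp add: inv_into_into)
  qed
  show ?thesis unfolding arrows_def
  proof (intro allI impI)
    fix c :: "_ \<Rightarrow> nat" assume c: "c ` copies ar C1 A \<subseteq> {..<k}"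
    define c2 where "c2 Z = c (?gi ` Z)" for Z
    have "c2 ` copies ar C2 A \<subseteq> {..<k}"
    proof
      fix z assume "z \<in> c2 ` copies ar C2 A"
      then obtain Z where Z: "Z \<in> copies ar C2 A" "z = c2 Z" by auto
      have Zs: "Z \<subseteq> fst C2" using Z unfolding copies_def by auto
      have gZ: "g ` (?gi ` Z) = Z" using fwd[OF Zs] .
      have "?gi ` Z \<subseteq> fst C1" using into[OF Zs] .
      hence "?gi ` Z \<in> copies ar C1 A" using cop[of "?gi ` Z" A] gZ Z by simp
      thus "z \<in> {..<k}" using c Z c2_def by auto
    qed
    with ar2 obtain Y i where Y: "Y \<in> copies ar C2 B" "\<forall>X\<in>copies ar C2 A. X \<subseteq> Y \<longrightarrow> c2 X = i"
      unfolding arrows_def by blast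
    have Ys: "Y \<subseteq> fst C2" using Y unfolding copies_def by auto
    have gY: "g ` (?gi ` Y) = Y" using fwd[OF Ys] .
    have Y1s: "?gi ` Y \<subseteq> fst C1" using into[OF Ys] .
    have "?gi ` Y \<in> copies ar C1 B" using cop[OF Y1s, of B] gY Y by simp
    moreover have "\<forall>X\<in>copies ar C1 A. X \<subseteq> ?gi ` Y \<longrightarrow> c X = i"
    proof (intro ballI impI)
      fix X assume X: "X \<in> copies ar C1 A" "X \<subseteq> ?gi ` Y"
      have Xs: "X \<subseteq> fst C1" using X unfolding copies_def by auto
      have "g ` X \<in> copies ar C2 A" using cop Xs X by blast
      moreover have "g ` X \<subseteq> Y" using X(2) gY by blast
      ultimately have "c2 (g ` X) = i" using Y by blast
      thus "c X = i" using bk[OF Xs] c2_def by simp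
    qed
    ultimately show "\<exists>Y\<in>copies ar C1 B. \<exists>i. \<forall>X\<in>copies ar C1 A. X \<subseteq> Y \<longrightarrow> c X = i" by blast
  qed
qed


locale bsetting =
  fixes ar :: "'s \<Rightarrow> nat" and E0 Lt :: 's and T :: "'a set" and E :: "'a \<Rightarrow> 'a \<Rightarrow> bool"
    and Tstar :: "('a, 's) struct" and n :: nat
  assumes tour: "tournament T E" and exp: "is_expansion ar E0 Lt T E Tstar"
begin

abbreviation "Bl \<equiv> blowup ar E0 Lt Tstar n"
abbreviation "ar' \<equiv> blowup_ar ar"

lemma fstT: "fst Tstar = T" using exp by (simp add: is_expansion_def)
lemma fstBl: "fst Bl = T \<times> {..<n}" by (simp add: blowup_def fstT)
lemma E0Lt: "E0 \<noteq> Lt" and arE0: "ar E0 = 2" and arLt: "ar Lt = 2"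
  using exp by (auto simp: is_expansion_def)
lemma E0T: "x \<in> T \<Longrightarrow> y \<in> T \<Longrightarrow> snd Tstar E0 [x, y] \<longleftrightarrow> E x y"
  using exp by (auto simp: is_expansion_def)

lemma slo: "strict_linear_order_on T {(x, y). snd Tstar Lt [x, y]}"
  using exp by (auto simp: is_expansion_def)
lemma Lt_irr: "\<not> snd Tstar Lt [x, x]"
  using slo unfolding strict_linear_order_on_def irrefl_def by auto
lemma Lt_trans: "snd Tstar Lt [x, y] \<Longrightarrow> snd Tstar Lt [y, z] \<Longrightarrow> snd Tstar Lt [x, z]"
  using slo unfolding strict_linear_order_on_def trans_def by auto
lemma Lt_total: "x \<in> T \<Longrightarrow> y \<in> T \<Longrightarrow> x \<noteq> y \<Longrightarrow> snd Tstar Lt [x, y] \<or> snd Tstar Lt [y, x]"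
  using slo unfolding strict_linear_order_on_def total_on_def by auto

lemma same_fst: "x \<in> T \<Longrightarrow> y \<in> T \<Longrightarrow> x = y \<longleftrightarrow> \<not> E x y \<and> \<not> E y x"
  using tour unfolding tournament_def by blast

lemma bl_Inr: "p \<in> T \<times> {..<n} \<Longrightarrow> snd Bl (Inr i) [p] \<longleftrightarrow> snd p = i"
  by (cases p) (auto simp: blowup_def fstT)

lemma bl_E0: "p \<in> T \<times> {..<n} \<Longrightarrow> q \<in> T \<times> {..<n} \<Longrightarrow> snd Bl (Inl E0) [p, q] \<longleftrightarrow> E (fst p) (fst q)"
  using E0Lt arE0 E0T by (cases p; cases q) (auto simp: blowup_def fstT)

lemma bl_Lt: "p \<in> T \<times> {..<n} \<Longrightarrow> q \<in> T \<times> {..<n} \<Longrightarrow>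
   snd Bl (Inl Lt) [p, q] \<longleftrightarrow> snd Tstar Lt [fst p, fst q] \<or> (fst p = fst q \<and> snd p < snd q)"
  using arLt by (cases p; cases q) (auto simp: blowup_def fstT)

lemma bl_other: "r \<noteq> Lt \<Longrightarrow> set ps \<subseteq> T \<times> {..<n} \<Longrightarrow>
   snd Bl (Inl r) ps \<longleftrightarrow> length ps = ar r \<and> snd Tstar r (map fst ps)"
  by (auto simp: blowup_def fstT)

lemma len2: "length xs = 2 \<Longrightarrow> \<exists>x y. xs = [x, y]"
  by (auto simp: numeral_2_eq_2 length_Suc_conv)

lemma proj:
  assumes X1: "X1 \<subseteq> T \<times> {..<n}" and X2: "X2 \<subseteq> T \<times> {..<n}" and g: "bij_betw g X1 X2"
    and pg: "preserves ar' (induced Bl X1) (induced Bl X2) g"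
  shows "\<exists>gh. bij_betw gh (fst ` X1) (fst ` X2) \<and>
     preserves ar (induced Tstar (fst ` X1)) (induced Tstar (fst ` X2)) gh \<and>
     (\<forall>p\<in>X1. g p = (gh (fst p), snd p))"
proof -
  have gX: "g p \<in> X2" if "p \<in> X1" for p using g that by (auto simp: bij_betw_def)
  have pr: "snd Bl s ps \<longleftrightarrow> snd Bl s (map g ps)" if "set ps \<subseteq> X1" "length ps = ar' s" for s ps
  proof -
    have "set (map g ps) \<subseteq> X2" using that gX by auto
    thus ?thesis using pg that unfolding preserves_def induced_def by auto
  qed
  have sndg: "snd (g p) = snd p" if p: "p \<in> X1" for p
  proof -
    have m: "p \<in> T \<times> {..<n}" "g p \<in> T \<times> {..<n}" using p gX[OF p] X1 X2 by auto
    have "snd Bl (Inr (snd p)) [p] \<longleftrightarrow> snd Bl (Inr (snd p)) [g p]"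
      using pr[of "[p]" "Inr (snd p)"] p by simp
    thus ?thesis using bl_Inr[OF m(1)] bl_Inr[OF m(2)] by simp
  qed
  have fsteq: "fst p = fst q \<longleftrightarrow> fst (g p) = fst (g q)" if "p \<in> X1" "q \<in> X1" for p q
  proof -
    have m: "p \<in> T \<times> {..<n}" "q \<in> T \<times> {..<n}" "g p \<in> T \<times> {..<n}" "g q \<in> T \<times> {..<n}"
      using that gX[OF that(1)] gX[OF that(2)] X1 X2 by auto
    have a0: "snd Bl (Inl E0) [p, q] \<longleftrightarrow> snd Bl (Inl E0) [g p, g q]"
      using pr[of "[p, q]" "Inl E0"] that arE0 by simp
    have b0: "snd Bl (Inl E0) [q, p] \<longleftrightarrow> snd Bl (Inl E0) [g q, g p]"
      using pr[of "[q, p]" "Inl E0"] that arE0 by simp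
    have a: "E (fst p) (fst q) \<longleftrightarrow> E (fst (g p)) (fst (g q))"
      using a0 bl_E0[OF m(1) m(2)] bl_E0[OF m(3) m(4)] by simp
    have b: "E (fst q) (fst p) \<longleftrightarrow> E (fst (g q)) (fst (g p))"
      using b0 bl_E0[OF m(2) m(1)] bl_E0[OF m(4) m(3)] by simp
    have "fst p \<in> T" "fst q \<in> T" "fst (g p) \<in> T" "fst (g q) \<in> T"
      using that gX[OF that(1)] gX[OF that(2)] X1 X2 by auto
    thus ?thesis using a b same_fst by metis
  qed
  define lift where "lift x = (SOME p. p \<in> X1 \<and> fst p = x)" for x
  have lift: "lift x \<in> X1 \<and> fst (lift x) = x" if "x \<in> fst ` X1" for x
    unfolding lift_def by (rule someI_ex) (use that in auto)
  define gh where "gh x = fst (g (lift x))" for x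
  have gp: "g p = (gh (fst p), snd p)" if p: "p \<in> X1" for p
  proof -
    have l: "lift (fst p) \<in> X1" "fst (lift (fst p)) = fst p" using lift[of "fst p"] p by auto
    have "fst (g p) = gh (fst p)" unfolding gh_def using fsteq[OF p l(1)] l(2) by simp
    thus ?thesis using sndg[OF p] by (metis prod.collapse)
  qed
  have inj: "inj_on gh (fst ` X1)"
  proof (rule inj_onI)
    fix x y assume xy: "x \<in> fst ` X1" "y \<in> fst ` X1" "gh x = gh y"
    show "x = y" using fsteq[of "lift x" "lift y"] lift[OF xy(1)] lift[OF xy(2)] xy(3)
      unfolding gh_def by auto
  qed
  have img: "gh ` fst ` X1 = fst ` X2"
  proof -
    have "X2 = g ` X1" using g by (auto simp: bij_betw_def)
    hence "fst ` X2 = (\<lambda>p. fst (g p)) ` X1" by (simp add: image_image)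
    also have "\<dots> = (\<lambda>p. gh (fst p)) ` X1" using gp by (intro image_cong) auto
    also have "\<dots> = gh ` fst ` X1" by (simp add: image_image)
    finally show ?thesis by simp
  qed
  have bij: "bij_betw gh (fst ` X1) (fst ` X2)" using inj img by (auto simp: bij_betw_def)
  have ghT: "gh x \<in> fst ` X2" if "x \<in> fst ` X1" for x using img that by auto
  have pres: "preserves ar (induced Tstar (fst ` X1)) (induced Tstar (fst ` X2)) gh"
    unfolding preserves_def
  proof (intro allI impI)
    fix r xs assume "set xs \<subseteq> fst (induced Tstar (fst ` X1)) \<and> length xs = ar r"
    hence xs: "set xs \<subseteq> fst ` X1" "length xs = ar r" by (auto simp: induced_def)
    have s2: "set (map gh xs) \<subseteq> fst ` X2" using xs(1) ghT by (auto simp: subset_iff)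
    define ps where "ps = map lift xs"
    have l1: "\<forall>x\<in>set xs. lift x \<in> X1" and l2: "\<forall>x\<in>set xs. fst (lift x) = x"
      using xs(1) lift by blast+
    have ps1: "set ps \<subseteq> X1" using l1 unfolding ps_def by auto
    have ps2: "map fst ps = xs" using l2 unfolding ps_def by (simp add: map_idI)
    have ps3: "map fst (map g ps) = map gh xs" unfolding ps_def gh_def by simp
    have ps4: "set (map g ps) \<subseteq> X2" using ps1 gX by auto
    have key: "snd Tstar r xs \<longleftrightarrow> snd Tstar r (map gh xs)"
    proof (cases "r = Lt")
      case False
      have lp: "length ps = ar' (Inl r)" using xs(2) unfolding ps_def by simp
      have e: "snd Bl (Inl r) ps \<longleftrightarrow> snd Bl (Inl r) (map g ps)"
        using pr[OF ps1 lp] .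
      have t1: "set ps \<subseteq> T \<times> {..<n}" using ps1 X1 by blast
      have t2: "set (map g ps) \<subseteq> T \<times> {..<n}" using ps4 X2 by blast
      have "snd Bl (Inl r) ps \<longleftrightarrow> snd Tstar r xs"
        using bl_other[OF False t1] ps2 lp by simp
      moreover have "snd Bl (Inl r) (map g ps) \<longleftrightarrow> snd Tstar r (map gh xs)"
        using bl_other[OF False t2] ps3 lp by simp
      ultimately show ?thesis using e by simp
    next
      case True
      then obtain x y where xy: "xs = [x, y]" using xs arLt len2 by metis
      have lx: "lift x \<in> X1" "fst (lift x) = x" and ly: "lift y \<in> X1" "fst (lift y) = y"
        using lift xs xy by auto
      have e: "snd Bl (Inl Lt) [lift x, lift y] \<longleftrightarrow> snd Bl (Inl Lt) [g (lift x), g (lift y)]"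
        using pr[of "[lift x, lift y]" "Inl Lt"] lx ly arLt by auto
      have mx: "lift x \<in> T \<times> {..<n}" "lift y \<in> T \<times> {..<n}" using lx ly X1 by auto
      have my: "g (lift x) \<in> T \<times> {..<n}" "g (lift y) \<in> T \<times> {..<n}"
        using gX[OF lx(1)] gX[OF ly(1)] X2 by auto
      have 1: "snd Bl (Inl Lt) [lift x, lift y] \<longleftrightarrow> snd Tstar Lt [x, y]"
        using bl_Lt[OF mx] lx(2) ly(2) Lt_irr by auto
      have inj': "gh x = gh y \<Longrightarrow> x = y" using inj xs xy by (auto simp: inj_on_def)
      have gx: "g (lift x) = (gh x, snd (lift x))" "g (lift y) = (gh y, snd (lift y))"
        using gp[OF lx(1)] gp[OF ly(1)] lx(2) ly(2) by auto
      have 2: "snd Bl (Inl Lt) [g (lift x), g (lift y)] \<longleftrightarrow> snd Tstar Lt [gh x, gh y]"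
        using bl_Lt[OF my] gx inj' Lt_irr by auto
      show ?thesis using e 1 2 True xy by simp
    qed
    show "snd (induced Tstar (fst ` X1)) r xs = snd (induced Tstar (fst ` X2)) r (map gh xs)"
      using key xs s2 by (simp add: induced_def)
  qed
  show ?thesis using bij pres gp by blast
qed

end


context bsetting begin

lemma hiso:
  assumes "isomorphic ar (induced Tstar Z1) (induced Tstar Z2)"
  shows "\<exists>h. bij_betw h Z1 Z2 \<and> preserves ar (induced Tstar Z1) (induced Tstar Z2) h"
  using assms unfolding isomorphic_def by (simp add: induced_def)

lemma liftiso:
  assumes h: "bij_betw h Z1 Z2" "preserves ar (induced Tstar Z1) (induced Tstar Z2) h"
    and Z: "Z1 \<subseteq> T" "Z2 \<subseteq> T" and V: "V \<subseteq> Z1 \<times> {..<n}"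
  shows "isomorphic ar' (induced Bl V) (induced Bl ((\<lambda>(x, i). (h x, i)) ` V))"
proof -
  define L where "L = (\<lambda>(x::'a, i::nat). (h x, i))"
  have hZ: "h x \<in> Z2" if "x \<in> Z1" for x using h(1) that by (auto simp: bij_betw_def)
  have hinj: "x = y" if "x \<in> Z1" "y \<in> Z1" "h x = h y" for x y
    using h(1) that by (auto simp: bij_betw_def inj_on_def)
  have hpres: "snd Tstar r xs \<longleftrightarrow> snd Tstar r (map h xs)" if "set xs \<subseteq> Z1" "length xs = ar r" for r xs
  proof -
    have "set (map h xs) \<subseteq> Z2" using that hZ by auto
    thus ?thesis using h(2) that unfolding preserves_def induced_def by auto
  qed
  have bijL: "bij_betw L (Z1 \<times> {..<n}) (Z2 \<times> {..<n})"
  proof -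
    have "inj_on L (Z1 \<times> {..<n})" unfolding L_def inj_on_def using hinj by auto
    moreover have "L ` (Z1 \<times> {..<n}) = Z2 \<times> {..<n}"
    proof
      show "L ` (Z1 \<times> {..<n}) \<subseteq> Z2 \<times> {..<n}" unfolding L_def using hZ by auto
      show "Z2 \<times> {..<n} \<subseteq> L ` (Z1 \<times> {..<n})"
      proof
        fix p assume p: "p \<in> Z2 \<times> {..<n}"
        then obtain x where x: "x \<in> Z1" "h x = fst p" using h(1) by (auto simp: bij_betw_def)
        hence "L (x, snd p) = p" unfolding L_def by auto
        thus "p \<in> L ` (Z1 \<times> {..<n})" using x p by force
      qed
    qed
    ultimately show ?thesis by (simp add: bij_betw_def)
  qed
  have presL: "preserves ar' (induced Bl (Z1 \<times> {..<n})) (induced Bl (Z2 \<times> {..<n})) L"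
    unfolding preserves_def
  proof (intro allI impI)
    fix s ps assume "set ps \<subseteq> fst (induced Bl (Z1 \<times> {..<n})) \<and> length ps = ar' s"
    hence ps: "set ps \<subseteq> Z1 \<times> {..<n}" "length ps = ar' s" by (auto simp: induced_def)
    have ps': "set (map L ps) \<subseteq> Z2 \<times> {..<n}"
      using image_mono[OF ps(1), of L] bijL unfolding bij_betw_def set_map by blast
    have psT: "set ps \<subseteq> T \<times> {..<n}" "set (map L ps) \<subseteq> T \<times> {..<n}"
      using ps(1) ps' Z by blast+
    have sL: "snd (L p) = snd p" for p unfolding L_def by (simp add: case_prod_beta)
    have fL1: "fst (L p) = h (fst p)" for p unfolding L_def by (simp add: case_prod_beta)
    have fL: "map fst (map L ps) = map h (map fst ps)" by (induct ps) (simp_all add: fL1)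
    have key: "snd Bl s ps \<longleftrightarrow> snd Bl s (map L ps)"
    proof (cases s)
      case (Inr i)
      have "length ps = 1" using ps(2) Inr by simp
      then obtain p where p: "ps = [p]" by (auto simp: length_Suc_conv)
      have m: "p \<in> T \<times> {..<n}" "L p \<in> T \<times> {..<n}" using psT p by auto
      show ?thesis unfolding Inr p list.map bl_Inr[OF m(1)] bl_Inr[OF m(2)] sL ..
    next
      case (Inl r)
      show ?thesis
      proof (cases "r = Lt")
        case False
        have "set (map fst ps) \<subseteq> Z1" using ps(1) by auto
        moreover have "length (map fst ps) = ar r" using ps(2) Inl by simp
        ultimately have "snd Tstar r (map fst ps) \<longleftrightarrow> snd Tstar r (map h (map fst ps))"
          by (rule hpres)
        moreover have "snd Bl (Inl r) ps \<longleftrightarrow> length ps = ar r \<and> snd Tstar r (map fst ps)"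
          by (rule bl_other[OF False psT(1)])
        moreover have "snd Bl (Inl r) (map L ps) \<longleftrightarrow> length (map L ps) = ar r \<and> snd Tstar r (map fst (map L ps))"
          by (rule bl_other[OF False psT(2)])
        ultimately show ?thesis using Inl unfolding fL length_map by simp
      next
        case True
        have "length ps = 2" using ps(2) Inl True arLt by simp
        then obtain p q where pq: "ps = [p, q]" using len2 by blast
        have pZ: "fst p \<in> Z1" "fst q \<in> Z1" using ps(1) pq by auto
        have A: "snd Tstar Lt [fst p, fst q] \<longleftrightarrow> snd Tstar Lt [h (fst p), h (fst q)]"
        proof -
          have "set [fst p, fst q] \<subseteq> Z1" "length [fst p, fst q] = ar Lt" using pZ arLt by auto
          from hpres[OF this] show ?thesis by simp
        qed
        have B: "h (fst p) = h (fst q) \<longleftrightarrow> fst p = fst q"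
        proof
          assume "h (fst p) = h (fst q)" thus "fst p = fst q" by (rule hinj[OF pZ])
        qed simp
        have m: "p \<in> T \<times> {..<n}" "q \<in> T \<times> {..<n}" "L p \<in> T \<times> {..<n}" "L q \<in> T \<times> {..<n}"
          using psT pq by auto
        have e1: "snd Bl (Inl Lt) [p, q] \<longleftrightarrow> snd Tstar Lt [fst p, fst q] \<or> (fst p = fst q \<and> snd p < snd q)"
          by (rule bl_Lt[OF m(1,2)])
        have e2: "snd Bl (Inl Lt) [L p, L q] \<longleftrightarrow> snd Tstar Lt [h (fst p), h (fst q)] \<or> (h (fst p) = h (fst q) \<and> snd p < snd q)"
          using bl_Lt[OF m(3,4)] unfolding fL1 sL .
        have "snd Bl (Inl Lt) [p, q] \<longleftrightarrow> snd Bl (Inl Lt) [L p, L q]"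
          unfolding e1 e2 A B ..
        thus ?thesis using Inl \<open>r = Lt\<close> pq by simp
      qed
    qed
    show "snd (induced Bl (Z1 \<times> {..<n})) s ps = snd (induced Bl (Z2 \<times> {..<n})) s (map L ps)"
      using key ps(1) ps' unfolding induced_def snd_conv by blast
  qed
  have f1: "fst (induced Bl (Z1 \<times> {..<n})) = Z1 \<times> {..<n}" and f2: "fst (induced Bl (Z2 \<times> {..<n})) = Z2 \<times> {..<n}"
    by (simp_all add: induced_def)
  have "isomorphic ar' (induced (induced Bl (Z1 \<times> {..<n})) V) (induced (induced Bl (Z2 \<times> {..<n})) (L ` V))"
    by (rule restrict_iso) (simp_all only: f1 f2 bijL presL V)
  moreover have "L ` V \<subseteq> Z2 \<times> {..<n}" using V bijL by (auto simp: bij_betw_def)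
  ultimately have "isomorphic ar' (induced Bl V) (induced Bl (L ` V))"
    using V by (simp only: induced_induced)
  thus ?thesis unfolding L_def .
qed

lemma order_auto_id:
  assumes Z: "finite Z" "Z \<subseteq> T" and f: "bij_betw f Z Z"
    and pres: "\<And>x y. x \<in> Z \<Longrightarrow> y \<in> Z \<Longrightarrow> snd Tstar Lt [x, y] \<longleftrightarrow> snd Tstar Lt [f x, f y]"
    and x: "x \<in> Z"
  shows "f x = x"
proof -
  define rk where "rk y = card {z \<in> Z. snd Tstar Lt [z, y]}" for y
  have fZ: "f y \<in> Z" if "y \<in> Z" for y using f that by (auto simp: bij_betw_def)
  have rkf: "rk (f y) = rk y" if y: "y \<in> Z" for y
  proof -
    have eqS: "f ` {z \<in> Z. snd Tstar Lt [z, y]} = {z \<in> Z. snd Tstar Lt [z, f y]}"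
    proof
      show "f ` {z \<in> Z. snd Tstar Lt [z, y]} \<subseteq> {z \<in> Z. snd Tstar Lt [z, f y]}"
      proof
        fix w assume "w \<in> f ` {z \<in> Z. snd Tstar Lt [z, y]}"
        then obtain z where z: "z \<in> Z" "snd Tstar Lt [z, y]" "w = f z" by blast
        have "snd Tstar Lt [f z, f y]" using pres[OF z(1) y] z(2) by blast
        thus "w \<in> {z \<in> Z. snd Tstar Lt [z, f y]}" using z fZ by blast
      qed
      show "{z \<in> Z. snd Tstar Lt [z, f y]} \<subseteq> f ` {z \<in> Z. snd Tstar Lt [z, y]}"
      proof
        fix w assume w: "w \<in> {z \<in> Z. snd Tstar Lt [z, f y]}"
        have "w \<in> f ` Z" using w f by (simp add: bij_betw_def)
        then obtain z where z: "z \<in> Z" "w = f z" by blast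
        hence "snd Tstar Lt [z, y]" using pres[OF z(1) y] w by blast
        thus "w \<in> f ` {z \<in> Z. snd Tstar Lt [z, y]}" using z by auto
      qed
    qed
    have injS: "inj_on f {z \<in> Z. snd Tstar Lt [z, y]}"
    proof -
      have "inj_on f Z" using f by (simp add: bij_betw_def)
      moreover have "{z \<in> Z. snd Tstar Lt [z, y]} \<subseteq> Z" by blast
      ultimately show ?thesis by (rule inj_on_subset)
    qed
    have "card {z \<in> Z. snd Tstar Lt [z, f y]} = card {z \<in> Z. snd Tstar Lt [z, y]}"
      unfolding eqS[symmetric] by (rule card_image[OF injS])
    thus ?thesis unfolding rk_def .
  qed
  have mono: "rk a < rk b" if "a \<in> Z" "b \<in> Z" "snd Tstar Lt [a, b]" for a b
  proof -
    have "{z \<in> Z. snd Tstar Lt [z, a]} \<subseteq> {z \<in> Z. snd Tstar Lt [z, b]}"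
      using Lt_trans[OF _ that(3)] by blast
    moreover have "a \<in> {z \<in> Z. snd Tstar Lt [z, b]}" "a \<notin> {z \<in> Z. snd Tstar Lt [z, a]}"
      using that Lt_irr by auto
    ultimately have "{z \<in> Z. snd Tstar Lt [z, a]} \<subset> {z \<in> Z. snd Tstar Lt [z, b]}" by blast
    thus ?thesis unfolding rk_def using Z(1) by (simp add: psubset_card_mono)
  qed
  show ?thesis
  proof (rule ccontr)
    assume ne: "f x \<noteq> x"
    have "f x \<in> Z" using fZ x by auto
    then have "snd Tstar Lt [x, f x] \<or> snd Tstar Lt [f x, x]" using Lt_total ne x Z(2) by auto
    thus False using mono[OF x \<open>f x \<in> Z\<close>] mono[OF \<open>f x \<in> Z\<close> x] rkf[OF x] by linarith
  qed
qed

lemma uniq: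
  assumes X1: "X1 \<subseteq> T \<times> {..<n}" "finite X1" and X2: "X2 \<subseteq> T \<times> {..<n}"
    and same: "fst ` X1 = fst ` X2" and iso: "isomorphic ar' (induced Bl X1) (induced Bl X2)"
  shows "X1 = X2"
proof -
  obtain g where g: "bij_betw g X1 X2" "preserves ar' (induced Bl X1) (induced Bl X2) g"
    using iso unfolding isomorphic_def by (auto simp: induced_def)
  obtain gh where gh: "bij_betw gh (fst ` X1) (fst ` X2)"
     "preserves ar (induced Tstar (fst ` X1)) (induced Tstar (fst ` X2)) gh"
     "\<forall>p\<in>X1. g p = (gh (fst p), snd p)"
    using proj[OF X1(1) X2 g] by blast
  have ghZ: "gh x \<in> fst ` X1" if "x \<in> fst ` X1" for x
  proof -
    have "gh ` fst ` X1 = fst ` X2" using gh(1) by (simp add: bij_betw_def)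
    thus ?thesis using that same by blast
  qed
  have id: "gh x = x" if "x \<in> fst ` X1" for x
  proof (rule order_auto_id[of "fst ` X1" gh x])
    show "finite (fst ` X1)" using X1 by auto
    show "fst ` X1 \<subseteq> T" using X1 by auto
    show "bij_betw gh (fst ` X1) (fst ` X1)" using gh(1) same by simp
    show "x \<in> fst ` X1" by fact
    fix a b assume ab: "a \<in> fst ` X1" "b \<in> fst ` X1"
    have "set (map gh [a, b]) \<subseteq> fst ` X2" using ab ghZ same by auto
    thus "snd Tstar Lt [a, b] \<longleftrightarrow> snd Tstar Lt [gh a, gh b]"
      using gh(2) ab arLt unfolding preserves_def induced_def by auto
  qed
  have "g p = p" if "p \<in> X1" for p using gh(3) id that by auto
  hence "g ` X1 = X1" by auto
  thus ?thesis using g(1) by (simp add: bij_betw_def)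
qed

lemma liftcopy:
  assumes Z: "Z \<subseteq> T" and Y: "Y \<subseteq> T \<times> {..<n}"
    and iso: "isomorphic ar (induced Tstar Z) (induced Tstar (fst ` Y))"
  shows "\<exists>W. W \<subseteq> Z \<times> {..<n} \<and> fst ` W = Z \<and> isomorphic ar' (induced Bl W) (induced Bl Y)"
proof -
  obtain h where h: "bij_betw h (fst ` Y) Z" "preserves ar (induced Tstar (fst ` Y)) (induced Tstar Z) h"
    using hiso[OF iso_sym[OF iso]] by blast
  have V: "Y \<subseteq> fst ` Y \<times> {..<n}" using Y by force
  let ?W = "(\<lambda>(x, i). (h x, i)) ` Y"
  have i: "isomorphic ar' (induced Bl Y) (induced Bl ?W)"
    by (rule liftiso[OF h _ Z V]) (use Y in auto)
  have "?W \<subseteq> Z \<times> {..<n}"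
  proof
    fix w assume "w \<in> ?W"
    then obtain x i where xi: "(x, i) \<in> Y" "w = (h x, i)" by auto
    have "x \<in> fst ` Y" using xi(1) by force
    hence "h x \<in> Z" using h(1) by (auto simp: bij_betw_def)
    thus "w \<in> Z \<times> {..<n}" using xi Y by auto
  qed
  moreover have "fst ` ?W = Z"
  proof -
    have "fst ` ?W = h ` fst ` Y" by (force simp: image_iff)
    thus ?thesis using h(1) by (simp add: bij_betw_def)
  qed
  ultimately show ?thesis using iso_sym[OF i] by blast
qed

lemma projcopy:
  assumes X: "X \<subseteq> T \<times> {..<n}" and Y: "Y \<subseteq> T \<times> {..<n}"
    and iso: "isomorphic ar' (induced Bl X) (induced Bl Y)"
  shows "isomorphic ar (induced Tstar (fst ` X)) (induced Tstar (fst ` Y))"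
proof -
  obtain g where g: "bij_betw g X Y" "preserves ar' (induced Bl X) (induced Bl Y) g"
    using iso unfolding isomorphic_def by (auto simp: induced_def)
  show ?thesis using proj[OF X Y g] unfolding isomorphic_def by (auto simp: induced_def)
qed

end

context bsetting begin

lemma core:
  assumes D: "finite D" "D \<subseteq> T"
    and YA: "YA \<subseteq> T \<times> {..<n}" and YB: "YB \<subseteq> T \<times> {..<n}"
    and isoA': "isomorphic ar' A' (induced Bl YA)" and isoB': "isomorphic ar' B' (induced Bl YB)"
    and isoA: "isomorphic ar A (induced Tstar (fst ` YA))"
    and isoB: "isomorphic ar B (induced Tstar (fst ` YB))"
    and arr: "arrows ar (induced Tstar D) B A k"
  shows "arrows ar' (induced Bl (D \<times> {..<n})) B' A' k"
  unfolding arrows_def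
proof (intro allI impI)
  let ?D' = "D \<times> {..<n}"
  fix c' :: "_ \<Rightarrow> nat" assume c': "c' ` copies ar' (induced Bl ?D') A' \<subseteq> {..<k}"
  have cpA': "copies ar' (induced Bl ?D') A' = {X. X \<subseteq> ?D' \<and> isomorphic ar' (induced Bl X) A'}"
    by (rule copies_induced)
  have cpB': "copies ar' (induced Bl ?D') B' = {X. X \<subseteq> ?D' \<and> isomorphic ar' (induced Bl X) B'}"
    by (rule copies_induced)
  have cpA: "copies ar (induced Tstar D) A = {X. X \<subseteq> D \<and> isomorphic ar (induced Tstar X) A}"
    by (rule copies_induced)
  have cpB: "copies ar (induced Tstar D) B = {X. X \<subseteq> D \<and> isomorphic ar (induced Tstar X) B}"
    by (rule copies_induced)
  define P where "P Z X \<longleftrightarrow> X \<subseteq> ?D' \<and> fst ` X = Z \<and> isomorphic ar' (induced Bl X) A'" for Z X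
  define \<Phi> where "\<Phi> Z = (SOME X. P Z X)" for Z
  define c where "c Z = c' (\<Phi> Z)" for Z
  have exA: "\<exists>X. P Z X" if Z: "Z \<in> copies ar (induced Tstar D) A" for Z
  proof -
    have Z1: "Z \<subseteq> D" "isomorphic ar (induced Tstar Z) A" using Z cpA by auto
    have i1: "isomorphic ar (induced Tstar Z) (induced Tstar (fst ` YA))" by (rule iso_trans[OF Z1(2) isoA])
    have ZT: "Z \<subseteq> T" using Z1(1) D(2) by blast
    obtain W where W: "W \<subseteq> Z \<times> {..<n}" "fst ` W = Z" "isomorphic ar' (induced Bl W) (induced Bl YA)"
      using liftcopy[OF ZT YA i1] by blast
    have "isomorphic ar' (induced Bl W) A'" by (rule iso_trans[OF W(3) iso_sym[OF isoA']])
    thus ?thesis unfolding P_def using W Z1 by blast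
  qed
  have PPhi: "P Z (\<Phi> Z)" if "\<exists>X. P Z X" for Z unfolding \<Phi>_def using that by (rule someI_ex)
  have "c ` copies ar (induced Tstar D) A \<subseteq> {..<k}"
  proof
    fix z assume "z \<in> c ` copies ar (induced Tstar D) A"
    then obtain Z where Z: "Z \<in> copies ar (induced Tstar D) A" "z = c Z" by auto
    have "P Z (\<Phi> Z)" using PPhi exA Z by blast
    hence "\<Phi> Z \<in> copies ar' (induced Bl ?D') A'" unfolding cpA' P_def by auto
    thus "z \<in> {..<k}" using c' Z c_def by auto
  qed
  with arr obtain Y i where Y: "Y \<in> copies ar (induced Tstar D) B"
    "\<forall>X\<in>copies ar (induced Tstar D) A. X \<subseteq> Y \<longrightarrow> c X = i"
    unfolding arrows_def by blast
  have Y1: "Y \<subseteq> D" "isomorphic ar (induced Tstar Y) B" using Y(1) cpB by auto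
  have i2: "isomorphic ar (induced Tstar Y) (induced Tstar (fst ` YB))" by (rule iso_trans[OF Y1(2) isoB])
  have YT: "Y \<subseteq> T" using Y1(1) D(2) by blast
  obtain W where W: "W \<subseteq> Y \<times> {..<n}" "fst ` W = Y" "isomorphic ar' (induced Bl W) (induced Bl YB)"
    using liftcopy[OF YT YB i2] by blast
  have WB: "isomorphic ar' (induced Bl W) B'" by (rule iso_trans[OF W(3) iso_sym[OF isoB']])
  have WD: "W \<subseteq> ?D'" using W(1) Y1(1) by auto
  have "W \<in> copies ar' (induced Bl ?D') B'" unfolding cpB' using WD WB by blast
  moreover have "\<forall>X\<in>copies ar' (induced Bl ?D') A'. X \<subseteq> W \<longrightarrow> c' X = i"
  proof (intro ballI impI)
    fix X assume X: "X \<in> copies ar' (induced Bl ?D') A'" "X \<subseteq> W"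
    have X1: "X \<subseteq> ?D'" "isomorphic ar' (induced Bl X) A'" using X(1) cpA' by auto
    have XT: "X \<subseteq> T \<times> {..<n}" using X1(1) D by auto
    have "isomorphic ar' (induced Bl X) (induced Bl YA)" by (rule iso_trans[OF X1(2) isoA'])
    hence "isomorphic ar (induced Tstar (fst ` X)) (induced Tstar (fst ` YA))"
      by (rule projcopy[OF XT YA])
    hence iA: "isomorphic ar (induced Tstar (fst ` X)) A" by (rule iso_trans[OF _ iso_sym[OF isoA]])
    have sub: "fst ` X \<subseteq> Y" using X(2) W(2) by auto
    hence "fst ` X \<in> copies ar (induced Tstar D) A" unfolding cpA using iA Y1(1) by auto
    hence ci: "c (fst ` X) = i" using Y(2) sub by blast
    have PX: "P (fst ` X) X" unfolding P_def using X1 by auto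
    hence PP: "P (fst ` X) (\<Phi> (fst ` X))" using PPhi by blast
    have fin: "finite (\<Phi> (fst ` X))" using PP D(1) unfolding P_def by (auto intro: finite_subset)
    have "\<Phi> (fst ` X) = X"
    proof (rule uniq)
      show "\<Phi> (fst ` X) \<subseteq> T \<times> {..<n}" using PP D unfolding P_def by auto
      show "finite (\<Phi> (fst ` X))" by fact
      show "X \<subseteq> T \<times> {..<n}" by fact
      show "fst ` \<Phi> (fst ` X) = fst ` X" using PP unfolding P_def by auto
      show "isomorphic ar' (induced Bl (\<Phi> (fst ` X))) (induced Bl X)"
      proof -
        have "isomorphic ar' (induced Bl (\<Phi> (fst ` X))) A'" using PP unfolding P_def by blast
        thus ?thesis by (rule iso_trans[OF _ iso_sym[OF X1(2)]])
      qed
    qed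
    thus "c' X = i" using ci c_def by simp
  qed
  ultimately show "\<exists>Y\<in>copies ar' (induced Bl ?D') B'. \<exists>i. \<forall>X\<in>copies ar' (induced Bl ?D') A'. X \<subseteq> Y \<longrightarrow> c' X = i"
    by blast
qed

end


theorem theorem4p2:
  fixes ar :: "'s::countable \<Rightarrow> nat"
    and E0 Lt :: 's
    and T :: "'a set"
    and E :: "'a \<Rightarrow> 'a \<Rightarrow> bool"
    and Tstar :: "('a, 's) struct"
    and n :: nat
  assumes "countable_homogeneous_tournament T E"
    and "is_expansion ar E0 Lt T E Tstar"
    and "ramsey_class ar (age ar Tstar)"
    and "n \<ge> 1"
  shows "ramsey_class (blowup_ar ar) (age (blowup_ar ar) (blowup ar E0 Lt Tstar n))"
proof -
  interpret bsetting ar E0 Lt T E Tstar n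
    using assms(1,2) by unfold_locales (auto simp: countable_homogeneous_tournament_def)
  show ?thesis
    unfolding ramsey_class_def
  proof (intro allI impI ballI)
    fix k :: nat and A' B' assume k: "k \<ge> 1"
      and A': "A' \<in> age ar' Bl" and B': "B' \<in> age ar' Bl"
    obtain fA where fA: "embedding ar' A' Bl fA" "finite (fst A')" using A' unfolding age_def by blast
    obtain fB where fB: "embedding ar' B' Bl fB" "finite (fst B')" using B' unfolding age_def by blast
    define YA where "YA = fA ` fst A'"
    define YB where "YB = fB ` fst B'"
    have YA: "YA \<subseteq> T \<times> {..<n}" "finite YA" using fA fstBl unfolding YA_def embedding_def by auto
    have YB: "YB \<subseteq> T \<times> {..<n}" "finite YB" using fB fstBl unfolding YB_def embedding_def by auto
    have isoA': "isomorphic ar' A' (induced Bl YA)" unfolding YA_def by (rule embedding_iso[OF fA(1)])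
    have isoB': "isomorphic ar' B' (induced Bl YB)" unfolding YB_def by (rule embedding_iso[OF fB(1)])
    have fa: "finite (fst ` YA)" "fst ` YA \<subseteq> fst Tstar" using YA fstT by auto
    obtain A where A: "A \<in> age ar Tstar" "isomorphic ar A (induced Tstar (fst ` YA))"
      using natcopy[OF fa] by blast
    have fb: "finite (fst ` YB)" "fst ` YB \<subseteq> fst Tstar" using YB fstT by auto
    obtain B where B: "B \<in> age ar Tstar" "isomorphic ar B (induced Tstar (fst ` YB))"
      using natcopy[OF fb] by blast
    obtain C where C: "C \<in> age ar Tstar" "arrows ar C B A k"
      using assms(3) k A(1) B(1) unfolding ramsey_class_def by blast
    obtain fC where fC: "embedding ar C Tstar fC" "finite (fst C)" using C(1) unfolding age_def by blast
    define D where "D = fC ` fst C"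
    have D: "finite D" "D \<subseteq> T" using fC fstT unfolding D_def embedding_def by auto
    have "isomorphic ar C (induced Tstar D)" unfolding D_def by (rule embedding_iso[OF fC(1)])
    hence arrD: "arrows ar (induced Tstar D) B A k" by (rule arrows_transport[OF iso_sym C(2)])
    have arrD': "arrows ar' (induced Bl (D \<times> {..<n})) B' A' k"
      by (rule core[OF D YA(1) YB(1) isoA' isoB' A(2) B(2) arrD])
    have fc: "finite (D \<times> {..<n})" "D \<times> {..<n} \<subseteq> fst Bl" using D fstBl by auto
    obtain C' where C': "C' \<in> age ar' Bl" "isomorphic ar' C' (induced Bl (D \<times> {..<n}))"
      using natcopy[OF fc] by blast
    show "\<exists>C\<in>age ar' Bl. arrows ar' C B' A' k"
      using C' arrows_transport[OF C'(2) arrD'] by blast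
  qed
qed


end
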